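(* Let $A=\begin{pmatrix} a & b\\ c & d\end{pmatrix}\in SL_2(\mathbb{Z})$ with $c>0$ and $d\neq 0$. (i) If $d>0$, let $S=\begin{pmatrix}0&-1\\1&0\end{pmatrix}$, so $AS=\begin{pmatrix} b&-a\\ d&-c\end{pmatrix}$; then $\epsilon_1(AS)=e^{-3\pi i/4}\epsilon_1(A)$. (ii) If $d<0$, let $S=\begin{pmatrix}0&1\\-1&0\end{pmatrix}$, so $AS=\begin{pmatrix} -b&a\\ -d&c\end{pmatrix}$; then $\epsilon_1(AS)=e^{3\pi i/4}\epsilon_1(A)$.
   Context: For integers $k>0$ and $h$ with $\gcd(h,k)=1$, the Dedekind sum is $s(h,k)=\sum_{r=1}^{k-1}\frac{r}{k}\left(\frac{hr}{k}-\left\lfloor\frac{hr}{k}\right\rfloor-\frac12\right)$. For $M=\begin{pmatrix} a&b\\ c&d\end{pmatrix}\in SL_2(\mathbb{Z})$ with $c>0$, define $\epsilon_1(M)=-i\exp\!\left(3\pi i\left(\frac{a+d}{12c}-s(d,c)\right)\right)$. In both cases the lower-left entry of $AS$ is positive, so $\epsilon_1(AS)$ is defined. *)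

theory Defs
  imports Complex_Main
begin

definition dedekind_sum :: "int \<Rightarrow> int \<Rightarrow> real" where
  "dedekind_sum h k = (\<Sum>r\<in>{1..k-1}. (real_of_int r / real_of_int k) *
      (real_of_int (h*r) / real_of_int k - real_of_int \<lfloor>real_of_int (h*r) / real_of_int k\<rfloor> - 1/2))"

definition eps1 :: "int \<Rightarrow> int \<Rightarrow> int \<Rightarrow> int \<Rightarrow> complex" where
  "eps1 a b c d = - \<i> * exp (3 * pi * \<i> *
      complex_of_real (real_of_int (a + d) / (12 * real_of_int c) - dedekind_sum d c))"

end

theory Submission
  imports Defs
begin

lemma sum_id_int: "(n::int) \<ge> 0 \<Longrightarrow> 2 * (\<Sum>r\<in>{1..n}. r) = n*(n+1)"
proof (induction n rule: int_ge_induct)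
  case base then show ?case by simp
next
  case (step i)
  have "(\<Sum>r\<in>{1..i+1}. r) = (\<Sum>r\<in>{1..i}. r) + (i+1)"
    using atLeastAtMostPlus1_int_conv[of 1 i] step by (simp add: add.commute)
  then show ?case using step.IH by (simp add: algebra_simps)
qed

lemma sum_sq_int: "(n::int) \<ge> 0 \<Longrightarrow> 6 * (\<Sum>r\<in>{1..n}. r^2) = n*(n+1)*(2*n+1)"
proof (induction n rule: int_ge_induct)
  case base then show ?case by simp
next
  case (step i)
  have "(\<Sum>r\<in>{1..i+1}. r^2) = (\<Sum>r\<in>{1..i}. r^2) + (i+1)^2"
    using atLeastAtMostPlus1_int_conv[of 1 i] step by (simp add: add.commute)
  then show ?case using step.IH by (simp add: algebra_simps power2_eq_square)
qed

definition AA :: "int \<Rightarrow> int \<Rightarrow> int" where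
  "AA h k = (\<Sum>r\<in>{1..k-1}. r * (h*r mod k))"

definition TT :: "int \<Rightarrow> int \<Rightarrow> int" where
  "TT h k = (\<Sum>r\<in>{1..k-1}. r * (h*r div k))"

lemma aux_alg: "h*r = k*q + m \<Longrightarrow> (r::int)*m + k*(r*q) = h*(r*r)"
  by algebra

lemma AA_TT: "AA h k = h * (\<Sum>r\<in>{1..k-1}. r^2) - k * TT h k"
proof -
  have "AA h k = (\<Sum>r\<in>{1..k-1}. h * r^2 - k * (r * (h*r div k)))"
    unfolding AA_def
  proof (intro sum.cong refl)
    fix r
    have "r * (h * r mod k) + k * (r * (h * r div k)) = h * (r * r)"
      by (rule aux_alg) simp
    then show "r * (h * r mod k) = h * r\<^sup>2 - k * (r * (h * r div k))"
      by (simp add: power2_eq_square)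
  qed
  then show ?thesis unfolding TT_def by (simp add: sum_subtractf sum_distrib_left)
qed

lemma no_eq:
  fixes h k x y :: int
  assumes "h > 0" "k > 0" "coprime h k" "x \<in> {1..k-1}"
  shows "k*y \<noteq> h*x"
proof
  assume "k*y = h*x"
  then have "k dvd h*x" by (metis dvd_triv_left)
  moreover have "coprime k h" using assms(3) by (simp add: coprime_commute)
  ultimately have "k dvd x" using coprime_dvd_mult_right_iff[of k h x] by simp
  then show False using assms(4) by (auto dest: zdvd_imp_le)
qed
lemma frac_mod:
  assumes "(k::int) > 0"
  shows "real_of_int z / real_of_int k - real_of_int \<lfloor>real_of_int z / real_of_int k\<rfloor>
      = real_of_int (z mod k) / real_of_int k"
proof -
  have E: "real_of_int z = real_of_int k * real_of_int (z div k) + real_of_int (z mod k)"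
  proof -
    have "z = k * (z div k) + z mod k" by simp
    then show ?thesis by (metis of_int_add of_int_mult)
  qed
  show ?thesis unfolding floor_divide_of_int_eq
    using assms by (subst E) (simp add: field_simps)
qed

lemma s_AA:
  assumes "k > 0"
  shows "dedekind_sum h k = real_of_int (AA h k) / (real_of_int k)^2 - (real_of_int k - 1)/4"
proof -
  have "dedekind_sum h k = (\<Sum>r\<in>{1..k-1}. real_of_int (r * (h*r mod k)) / (real_of_int k)^2
        - real_of_int r / (2 * real_of_int k))"
    unfolding dedekind_sum_def frac_mod[OF assms]
  proof (intro sum.cong refl)
    fix r
    show "real_of_int r / real_of_int k * (real_of_int (h * r mod k) / real_of_int k - 1 / 2) =
         real_of_int (r * (h * r mod k)) / (real_of_int k)\<^sup>2 - real_of_int r / (2 * real_of_int k)"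
      using assms by (simp add: field_simps power2_eq_square)
  qed
  also have "\<dots> = real_of_int (AA h k) / (real_of_int k)^2 - real_of_int (\<Sum>r\<in>{1..k-1}. r) / (2 * real_of_int k)"
    unfolding AA_def by (simp add: sum_subtractf sum_divide_distrib)
  also have "real_of_int (\<Sum>r\<in>{1..k-1}. r) = real_of_int ((k-1)*k) / 2"
  proof -
    have "2 * (\<Sum>r\<in>{1..k-1}. r) = (k-1)*k" using sum_id_int[of "k-1"] assms by simp
    then have "real_of_int (2 * (\<Sum>r\<in>{1..k-1}. r)) = real_of_int ((k-1)*k)" by (rule arg_cong)
    then show ?thesis by simp
  qed
  also have "real_of_int ((k-1)*k) / 2 / (2 * real_of_int k) = (real_of_int k - 1)/4"
    using assms by (simp add: field_simps)
  finally show ?thesis .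
qed
lemma mdl: "(k::int) > 0 \<Longrightarrow> k * (a div k) \<le> a"
proof -
  assume "k > 0"
  then have "0 \<le> a mod k" by simp
  moreover have "k * (a div k) + a mod k = a" by simp
  ultimately show ?thesis by linarith
qed

lemma kdvd:
  fixes h k x :: int
  assumes "k dvd h*x" "coprime h k" shows "k dvd x"
proof -
  have "coprime k h" using assms(2) by (simp add: coprime_commute)
  then show ?thesis using assms(1) coprime_dvd_mult_right_iff[of k h x] by simp
qed

lemma bij_mod:
  fixes h k :: int
  assumes "h > 0" "k > 0" "coprime h k"
  shows "bij_betw (\<lambda>x. h*x mod k) {1..k-1} {1..k-1}"
proof -
  have inj: "inj_on (\<lambda>x. h*x mod k) {1..k-1}"
  proof (rule inj_onI)
    fix x x' assume x: "x \<in> {1..k-1}" and x': "x' \<in> {1..k-1}" and eq: "h*x mod k = h*x' mod k"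
    then have "k dvd h*x - h*x'" by (simp add: mod_eq_dvd_iff)
    then have "k dvd h*(x - x')" by (simp add: right_diff_distrib)
    then have d: "k dvd (x - x')" using kdvd assms(3) by blast
    show "x = x'"
    proof (rule ccontr)
      assume "x \<noteq> x'"
      then have "\<bar>k\<bar> \<le> \<bar>x - x'\<bar>" using d dvd_imp_le_int by simp
      then show False using x x' assms(2) by auto
    qed
  qed
  have sub: "(\<lambda>x. h*x mod k) ` {1..k-1} \<subseteq> {1..k-1}"
  proof
    fix z assume "z \<in> (\<lambda>x. h*x mod k) ` {1..k-1}"
    then obtain x where x: "x \<in> {1..k-1}" and z: "z = h*x mod k" by auto
    have "z \<noteq> 0"
    proof
      assume "z = 0"
      then have "k dvd h*x" using z by (simp add: dvd_eq_mod_eq_0)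
      then have "k dvd x" using kdvd assms(3) by blast
      then show False using x by (auto dest: zdvd_imp_le)
    qed
    moreover have "0 \<le> z" "z < k" using z assms(2) by simp_all
    ultimately show "z \<in> {1..k-1}" by simp
  qed
  have "(\<lambda>x. h*x mod k) ` {1..k-1} = {1..k-1}" using endo_inj_surj[OF _ sub inj] by simp
  then show ?thesis using inj by (simp add: bij_betw_def)
qed

lemma row_set:
  fixes h k x :: int
  assumes "h > 0" "k > 0" "coprime h k" "x \<in> {1..k-1}"
  shows "{y\<in>{1..h-1}. k*y < h*x} = {1..h*x div k}" "h*x div k \<ge> 0"
proof -
  let ?m = "h*x div k"
  have "h*x \<ge> 0" using assms by (simp add: zero_le_mult_iff)
  then show m0: "?m \<ge> 0" using assms by (simp add: pos_imp_zdiv_nonneg_iff)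
  have mh: "?m \<le> h - 1"
  proof -
    have "h*x < k*h" using assms by simp
    show ?thesis
    proof (rule ccontr)
      assume "\<not> ?m \<le> h - 1"
      then have "k*h \<le> k*?m" using assms(2) by simp
      also have "\<dots> \<le> h*x" using mdl[OF assms(2)] by simp
      finally show False using \<open>h*x < k*h\<close> by simp
    qed
  qed
  show "{y\<in>{1..h-1}. k*y < h*x} = {1..?m}"
  proof (intro set_eqI iffI)
    fix y assume "y \<in> {y\<in>{1..h-1}. k*y < h*x}"
    then have "k*y < h*x" "1 \<le> y" by auto
    then have "k*y div k \<le> h*x div k" using assms(2) by (intro zdiv_mono1) auto
    then have "y \<le> ?m" using assms(2) by simp
    then show "y \<in> {1..?m}" using \<open>1 \<le> y\<close> by simp
  next
    fix y assume y: "y \<in> {1..?m}"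
    then have "k*y \<le> k*?m" using assms(2) by simp
    also have "\<dots> \<le> h*x" using mdl[OF assms(2)] by simp
    finally have "k*y < h*x" using no_eq[OF assms] by (metis order_le_less)
    then show "y \<in> {y\<in>{1..h-1}. k*y < h*x}" using y mh by auto
  qed
qed

lemma aux_row:
  fixes h k x m rho S1 Sm R :: int
  assumes "h*x = k*m + rho" "2*Sm = m*(m+1)" "R = k*S1 + m*(h*x) - k*Sm"
  shows "2*k*R = 2*k^2*S1 + h^2*x^2 - rho^2 - k*h*x + k*rho"
  using assms by algebra

lemma row_max:
  fixes h k x :: int
  assumes "h > 0" "k > 0" "coprime h k" "x \<in> {1..k-1}"
  shows "2*k*(\<Sum>y\<in>{1..h-1}. max (h*x) (k*y)) = 2*k^2*(\<Sum>y\<in>{1..h-1}. y) + h^2*x^2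
     - (h*x mod k)^2 - k*h*x + k*(h*x mod k)"
proof -
  let ?m = "h*x div k"
  note rs = row_set[OF assms]
  have "(\<Sum>y\<in>{1..h-1}. max (h*x) (k*y)) = (\<Sum>y\<in>{1..h-1}. k*y + (if k*y < h*x then h*x - k*y else 0))"
    by (intro sum.cong refl) auto
  also have "\<dots> = k*(\<Sum>y\<in>{1..h-1}. y) + (\<Sum>y\<in>{y\<in>{1..h-1}. k*y < h*x}. h*x - k*y)"
    by (simp add: sum.distrib sum_distrib_left sum.inter_filter[of "{1..h-1}", symmetric])
  also have "(\<Sum>y\<in>{y\<in>{1..h-1}. k*y < h*x}. h*x - k*y) = ?m*(h*x) - k*(\<Sum>y\<in>{1..?m}. y)"
    unfolding rs(1) using rs(2) by (simp add: sum_subtractf sum_distrib_left)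
  finally have R: "(\<Sum>y\<in>{1..h-1}. max (h*x) (k*y)) = k*(\<Sum>y\<in>{1..h-1}. y) + (?m*(h*x) - k*(\<Sum>y\<in>{1..?m}. y))" .
  show ?thesis
    by (rule aux_row[where m="?m" and Sm="\<Sum>y\<in>{1..?m}. y"]) (use R sum_id_int[OF rs(2)] in simp_all)
qed
lemma row_count:
  fixes h k x :: int
  assumes "h > 0" "k > 0" "coprime h k" "x \<in> {1..k-1}"
  shows "(\<Sum>y\<in>{1..h-1}. if k*y < h*x then h*x else 0) = h*x*(h*x div k)"
proof -
  note rs = row_set[OF assms]
  have "(\<Sum>y\<in>{1..h-1}. if k*y < h*x then h*x else 0) = (\<Sum>y\<in>{y\<in>{1..h-1}. k*y < h*x}. h*x)"
    by (simp add: sum.inter_filter[of "{1..h-1}", symmetric])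
  also have "\<dots> = h*x*(h*x div k)" unfolding rs(1) using rs(2) by simp
  finally show ?thesis .
qed

lemma M_TT:
  fixes h k :: int
  assumes "h > 0" "k > 0" "coprime h k"
  shows "(\<Sum>x\<in>{1..k-1}. \<Sum>y\<in>{1..h-1}. max (h*x) (k*y)) = h * TT h k + k * TT k h"
proof -
  have ck: "coprime k h" using assms(3) by (simp add: coprime_commute)
  have "(\<Sum>x\<in>{1..k-1}. \<Sum>y\<in>{1..h-1}. max (h*x) (k*y)) =
     (\<Sum>x\<in>{1..k-1}. \<Sum>y\<in>{1..h-1}. (if k*y < h*x then h*x else 0) + (if h*x < k*y then k*y else 0))"
  proof (intro sum.cong refl)
    fix x y assume x: "x \<in> {1..k-1}" and y: "y \<in> {1..h-1}"
    have "k*y \<noteq> h*x" using no_eq[OF assms x] .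
    then show "max (h*x) (k*y) = (if k*y < h*x then h*x else 0) + (if h*x < k*y then k*y else 0)"
      by auto
  qed
  also have "\<dots> = (\<Sum>x\<in>{1..k-1}. \<Sum>y\<in>{1..h-1}. if k*y < h*x then h*x else 0)
      + (\<Sum>y\<in>{1..h-1}. \<Sum>x\<in>{1..k-1}. if h*x < k*y then k*y else 0)"
    by (simp add: sum.distrib sum.swap[of _ "{1..h-1}"])
  also have "(\<Sum>x\<in>{1..k-1}. \<Sum>y\<in>{1..h-1}. if k*y < h*x then h*x else 0) = (\<Sum>x\<in>{1..k-1}. h*(x*(h*x div k)))"
    using row_count[OF assms] by (intro sum.cong refl) simp
  also have "(\<Sum>y\<in>{1..h-1}. \<Sum>x\<in>{1..k-1}. if h*x < k*y then k*y else 0) = (\<Sum>y\<in>{1..h-1}. k*(y*(k*y div h)))"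
    using row_count[OF assms(2,1) ck] by (intro sum.cong refl) simp
  finally show ?thesis unfolding TT_def by (simp add: sum_distrib_left)
qed

lemma M_closed:
  fixes h k :: int
  assumes "h > 0" "k > 0" "coprime h k"
  shows "2*k*(\<Sum>x\<in>{1..k-1}. \<Sum>y\<in>{1..h-1}. max (h*x) (k*y)) =
     (k-1)*(2*k^2*(\<Sum>y\<in>{1..h-1}. y)) + (h^2-1)*(\<Sum>x\<in>{1..k-1}. x^2) - k*(h-1)*(\<Sum>x\<in>{1..k-1}. x)"
proof -
  note bij = bij_mod[OF assms]
  have p2: "(\<Sum>x\<in>{1..k-1}. (h*x mod k)^2) = (\<Sum>x\<in>{1..k-1}. x^2)"
    using sum.reindex_bij_betw[OF bij, of "\<lambda>z. z^2"] by simp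
  have p1: "(\<Sum>x\<in>{1..k-1}. (h*x mod k)) = (\<Sum>x\<in>{1..k-1}. x)"
    using sum.reindex_bij_betw[OF bij, of "\<lambda>z. z"] by simp
  have "2*k*(\<Sum>x\<in>{1..k-1}. \<Sum>y\<in>{1..h-1}. max (h*x) (k*y)) =
     (\<Sum>x\<in>{1..k-1}. 2*k^2*(\<Sum>y\<in>{1..h-1}. y) + h^2*x^2 - (h*x mod k)^2 - k*h*x + k*(h*x mod k))"
  proof -
    have "2*k*(\<Sum>x\<in>{1..k-1}. \<Sum>y\<in>{1..h-1}. max (h*x) (k*y)) = (\<Sum>x\<in>{1..k-1}. 2*k*(\<Sum>y\<in>{1..h-1}. max (h*x) (k*y)))"
      by (rule sum_distrib_left)
    also have "\<dots> = (\<Sum>x\<in>{1..k-1}. 2*k^2*(\<Sum>y\<in>{1..h-1}. y) + h^2*x^2 - (h*x mod k)^2 - k*h*x + k*(h*x mod k))"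
      by (rule sum.cong[OF refl], rule row_max[OF assms])
    finally show ?thesis .
  qed
  also have "\<dots> = (\<Sum>x\<in>{1..k-1}. 2*k^2*(\<Sum>y\<in>{1..h-1}. y)) + h^2*(\<Sum>x\<in>{1..k-1}. x^2)
     - (\<Sum>x\<in>{1..k-1}. (h*x mod k)^2) - k*h*(\<Sum>x\<in>{1..k-1}. x) + k*(\<Sum>x\<in>{1..k-1}. (h*x mod k))"
    by (simp add: sum.distrib sum_subtractf sum_distrib_left mult.assoc)
  also have "(\<Sum>x\<in>{1..k-1}. 2*k^2*(\<Sum>y\<in>{1..h-1}. y)) = (k-1)*(2*k^2*(\<Sum>y\<in>{1..h-1}. y))"
    using assms(2) by simp
  finally show ?thesis unfolding p1 p2 by (simp add: algebra_simps)
qed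

lemma recip_alg:
  fixes h k A1 A2 T1 T2 M S1h S1k S2h S2k :: int
  assumes "A1 = h*S2k - k*T1" "A2 = k*S2h - h*T2" "M = h*T1 + k*T2"
    "2*k*M = (k-1)*(2*k^2*S1h) + (h^2-1)*S2k - k*(h-1)*S1k"
    "2*S1h = (h-1)*h" "2*S1k = (k-1)*k" "6*S2h = (h-1)*h*(2*h-1)" "6*S2k = (k-1)*k*(2*k-1)"
  shows "12*h^2*A1 + 12*k^2*A2 = 3*h^2*k^2*(h+k-3) + h*k*(h^2+k^2+1)"
  using assms by algebra

lemma recip_int:
  fixes h k :: int
  assumes "h > 0" "k > 0" "coprime h k"
  shows "12*h^2*AA h k + 12*k^2*AA k h = 3*h^2*k^2*(h+k-3) + h*k*(h^2+k^2+1)"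
proof -
  have s1: "2 * (\<Sum>y\<in>{1..h-1}. y) = (h-1)*h" using sum_id_int[of "h-1"] assms by simp
  have s2: "2 * (\<Sum>y\<in>{1..k-1}. y) = (k-1)*k" using sum_id_int[of "k-1"] assms by simp
  have s3: "6 * (\<Sum>y\<in>{1..h-1}. y^2) = (h-1)*h*(2*h-1)" using sum_sq_int[of "h-1"] assms by (simp add: algebra_simps)
  have s4: "6 * (\<Sum>y\<in>{1..k-1}. y^2) = (k-1)*k*(2*k-1)" using sum_sq_int[of "k-1"] assms by (simp add: algebra_simps)
  show ?thesis
    by (rule recip_alg[OF AA_TT[of h k] AA_TT[of k h] M_TT[OF assms] M_closed[OF assms] s1 s2 s3 s4])
qed

lemma real_recip:
  fixes x y a b :: real
  assumes "x > 0" "y > 0" "12*x^2*a + 12*y^2*b = 3*x^2*y^2*(x+y-3) + x*y*(x^2+y^2+1)"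
  shows "a/y^2 - (y-1)/4 + (b/x^2 - (x-1)/4) = -1/4 + (x^2+y^2+1)/(12*x*y)"
proof -
  have "a/y^2 - (y-1)/4 + (b/x^2 - (x-1)/4) - (-1/4 + (x^2+y^2+1)/(12*x*y))
     = (12*x^2*a + 12*y^2*b - (3*x^2*y^2*(x+y-3) + x*y*(x^2+y^2+1))) / (12*x^2*y^2)"
    using assms(1,2) by (simp add: field_simps power2_eq_square)
  also have "\<dots> = 0" using assms(3) by simp
  finally show ?thesis by simp
qed

lemma reciprocity:
  fixes h k :: int
  assumes "h > 0" "k > 0" "coprime h k"
  shows "dedekind_sum h k + dedekind_sum k h = -1/4 + (real_of_int h^2 + real_of_int k^2 + 1) / (12 * real_of_int h * real_of_int k)"
proof -
  have "real_of_int (12*h^2*AA h k + 12*k^2*AA k h) = real_of_int (3*h^2*k^2*(h+k-3) + h*k*(h^2+k^2+1))"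
    using recip_int[OF assms] by simp
  then have E: "12*(real_of_int h)^2*real_of_int (AA h k) + 12*(real_of_int k)^2*real_of_int (AA k h)
     = 3*(real_of_int h)^2*(real_of_int k)^2*(real_of_int h + real_of_int k - 3)
       + real_of_int h*real_of_int k*((real_of_int h)^2+(real_of_int k)^2+1)" by simp
  show ?thesis unfolding s_AA[OF assms(2)] s_AA[OF assms(1)]
    by (rule real_recip) (use assms E in simp_all)
qed
lemma aux_neg: "m' = k - m \<Longrightarrow> (r::int) * m' = k * r - r * m"
  by algebra

lemma AA_neg:
  fixes h k :: int
  assumes "k > 0" "coprime h k"
  shows "AA (-h) k = k * (\<Sum>r\<in>{1..k-1}. r) - AA h k"
proof -
  have "AA (-h) k = (\<Sum>r\<in>{1..k-1}. k * r - r * (h*r mod k))"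
    unfolding AA_def
  proof (intro sum.cong refl)
    fix r assume r: "r \<in> {1..k-1}"
    have "h*r mod k \<noteq> 0"
    proof
      assume "h*r mod k = 0"
      then have "k dvd h*r" by (simp add: dvd_eq_mod_eq_0)
      then have "k dvd r" using kdvd assms(2) by blast
      then show False using r by (auto dest: zdvd_imp_le)
    qed
    then have z: "(- (h*r)) mod k = k - h*r mod k" using zmod_zminus1_eq_if[of "h*r" k] by simp
    have "- h * r mod k = k - h * r mod k" using z by (metis minus_mult_left)
    then show "r * (- h * r mod k) = k * r - r * (h * r mod k)" by (rule aux_neg)
  qed
  then show ?thesis unfolding AA_def by (simp add: sum_subtractf sum_distrib_left)
qed

lemma ded_neg:
  fixes h k :: int
  assumes "k > 0" "coprime h k"
  shows "dedekind_sum (-h) k = - dedekind_sum h k"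
proof -
  have s: "2 * (\<Sum>r\<in>{1..k-1}. r) = (k-1)*k" using sum_id_int[of "k-1"] assms by simp
  then have s': "(\<Sum>r\<in>{1..k-1}. real_of_int r) = (real_of_int k - 1) * real_of_int k / 2"
  proof -
    have "real_of_int (2 * (\<Sum>r\<in>{1..k-1}. r)) = real_of_int ((k-1)*k)" using s by (rule arg_cong)
    then show ?thesis by simp
  qed
  show ?thesis unfolding s_AA[OF assms(1)] AA_neg[OF assms] using assms(1)
    by (simp add: s' field_simps power2_eq_square)
qed

lemma det_coprime:
  fixes a b c d :: int
  assumes "a * d - b * c = 1"
  shows "coprime c d"
proof (rule coprimeI)
  fix e assume "e dvd c" "e dvd d"
  then have "e dvd a * d - b * c" by simp
  then show "is_unit e" using assms by simp
qed

lemma exp_shift: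
  fixes X X' t :: real
  assumes "X' = X + t"
  shows "- \<i> * exp (3 * pi * \<i> * complex_of_real X') =
     exp (3 * pi * \<i> * complex_of_real t) * (- \<i> * exp (3 * pi * \<i> * complex_of_real X))"
proof -
  have "3 * pi * \<i> * complex_of_real X' = 3 * pi * \<i> * complex_of_real t + 3 * pi * \<i> * complex_of_real X"
    using assms by (simp add: algebra_simps)
  then show ?thesis by (simp add: exp_add)
qed

theorem lemma2:
  fixes a b c d :: int
  assumes det: "a * d - b * c = 1"
    and c_pos: "c > 0"
    and d_nz: "d \<noteq> 0"
  shows "(d > 0 \<longrightarrow> eps1 b (-a) d (-c) = exp (- 3 * pi * \<i> / 4) * eps1 a b c d)
       \<and> (d < 0 \<longrightarrow> eps1 (-b) a (-d) c = exp (3 * pi * \<i> / 4) * eps1 a b c d)"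
proof (intro conjI impI)
  have cop: "coprime c d" by (rule det_coprime[OF det])
  have detr: "real_of_int a * real_of_int d - real_of_int b * real_of_int c = 1"
    using arg_cong[OF det, of real_of_int] by simp
  assume dpos: "d > 0"
  have n: "dedekind_sum (-c) d = - dedekind_sum c d" using ded_neg[OF dpos cop] .
  have r: "dedekind_sum c d + dedekind_sum d c = -1/4 + (real_of_int c^2 + real_of_int d^2 + 1) / (12 * real_of_int c * real_of_int d)"
    using reciprocity[OF c_pos dpos cop] .
  then have r': "dedekind_sum d c = -1/4 + (real_of_int c^2 + real_of_int d^2 + 1) / (12 * real_of_int c * real_of_int d) - dedekind_sum c d"
    by simp
  have X: "real_of_int (b + - c) / (12 * real_of_int d) - dedekind_sum (- c) d
      = (real_of_int (a + d) / (12 * real_of_int c) - dedekind_sum d c) + (-1/4)"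
  proof -
    have "real_of_int (b + - c) / (12 * real_of_int d) - dedekind_sum (- c) d
      - ((real_of_int (a + d) / (12 * real_of_int c) - dedekind_sum d c) + (-1/4))
      = (real_of_int b * real_of_int c - real_of_int a * real_of_int d + 1) / (12 * real_of_int c * real_of_int d)"
      unfolding n r' using c_pos dpos by (simp add: field_simps power2_eq_square)
    also have "\<dots> = 0" using detr by simp
    finally show ?thesis by simp
  qed
  have e: "exp (3 * pi * \<i> * complex_of_real (-1/4)) = exp (- 3 * pi * \<i> / 4)"
    by (simp add: field_simps)
  show "eps1 b (-a) d (-c) = exp (- 3 * pi * \<i> / 4) * eps1 a b c d"
    unfolding eps1_def e[symmetric] by (rule exp_shift[OF X])
next
  have cop: "coprime c d" by (rule det_coprime[OF det])
  have detr: "real_of_int a * real_of_int d - real_of_int b * real_of_int c = 1"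
    using arg_cong[OF det, of real_of_int] by simp
  assume dneg: "d < 0"
  have dpos: "-d > 0" using dneg by simp
  have cop': "coprime c (-d)" using cop by simp
  have cop'': "coprime (-d) c" using cop' by (simp add: coprime_commute)
  have n: "dedekind_sum d c = - dedekind_sum (-d) c" using ded_neg[OF c_pos cop''] by simp
  have r: "dedekind_sum c (-d) + dedekind_sum (-d) c = -1/4 + (real_of_int c^2 + real_of_int (-d)^2 + 1) / (12 * real_of_int c * real_of_int (-d))"
    using reciprocity[OF c_pos dpos cop'] .
  then have r': "dedekind_sum (-d) c = -1/4 + (real_of_int c^2 + real_of_int (-d)^2 + 1) / (12 * real_of_int c * real_of_int (-d)) - dedekind_sum c (-d)"
    by simp
  have X: "real_of_int (- b + c) / (12 * real_of_int (-d)) - dedekind_sum c (-d)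
      = (real_of_int (a + d) / (12 * real_of_int c) - dedekind_sum d c) + 1/4"
  proof -
    have "real_of_int (- b + c) / (12 * real_of_int (-d)) - dedekind_sum c (-d)
      - ((real_of_int (a + d) / (12 * real_of_int c) - dedekind_sum d c) + 1/4)
      = (real_of_int b * real_of_int c - real_of_int a * real_of_int d + 1) / (12 * real_of_int c * real_of_int d)"
      unfolding n r' using c_pos dneg by (simp add: field_simps power2_eq_square)
    also have "\<dots> = 0" using detr by simp
    finally show ?thesis by simp
  qed
  have e: "exp (3 * pi * \<i> * complex_of_real (1/4)) = exp (3 * pi * \<i> / 4)"
    by (simp add: field_simps)
  show "eps1 (-b) a (-d) c = exp (3 * pi * \<i> / 4) * eps1 a b c d"
    unfolding eps1_def e[symmetric] by (rule exp_shift[OF X])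
qed

end
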